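(* Let $(H,K,I)$ be a split graph on $7$ distinct vertices with $I=\{a,b,u,v\}$ and $K=\{x,y,z\}$. Suppose the induced subgraphs $\langle a,x,y,u\rangle_H$ and $\langle b,x,z,v\rangle_H$ are both isomorphic to $P_4$. Then: (1) $u$ and $z$ are joined by a path $P$ in $A_4(H)$ with $V(P)\setminus\{z\}\subseteq I$; (2) $\Phi(H)$ is connected.
   Context: All graphs are finite and simple. A split graph is a graph $S$ whose vertex set is a disjoint union $V(S)=K\,\dot\cup\,I$ with $K$ a clique and $I$ an independent set; $(K,I)$ is called a bipartition of $S$, and $(S,K,I)$ denotes $S$ together with this fixed bipartition. $\langle W\rangle_G$ denotes the subgraph of $G$ induced by $W$. A 2-switch in a graph $G$ is performed on four distinct vertices $a,b,c,d$ with $ab,cd\in E(G)$ and $ac,bd\notin E(G)$: it deletes $ab,cd$ and adds $ac,bd$; $a,b,c,d$ are said to participate in it. $A_4(G)$ is the graph with vertex set $V(G)$ in which distinct $u,v$ are adjacent iff some 2-switch on $G$ has both $u$ and $v$ among its participating vertices. For a split graph $(S,K,I)$ and distinct $u,v\in I$, $\sigma_{uv}(S)$ is the number of induced subgraphs of $S$ isomorphic to $P_4$ containing both $u$ and $v$. The factor graph $\Phi(S)$ is the loopless multigraph with vertex set $I$ having exactly $\sigma_{uv}(S)$ parallel edges between $u$ and $v$. Graph notions (connected, complete, clique, etc.) applied to $\Phi(S)$ refer to its underlying simple graph, in which $u\sim v$ iff $\sigma_{uv}(S)\ge1$. *)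

theory Defs
  imports Main
begin

definition simple_graph :: "'a set \<Rightarrow> ('a \<Rightarrow> 'a \<Rightarrow> bool) \<Rightarrow> bool" where
  "simple_graph V E \<longleftrightarrow> finite V \<and> (\<forall>p q. E p q \<longrightarrow> E q p) \<and> (\<forall>p. \<not> E p p)
     \<and> (\<forall>p q. E p q \<longrightarrow> p \<in> V \<and> q \<in> V)"

definition split_graph :: "'a set \<Rightarrow> ('a \<Rightarrow> 'a \<Rightarrow> bool) \<Rightarrow> 'a set \<Rightarrow> 'a set \<Rightarrow> bool" where
  "split_graph V E K I \<longleftrightarrow> simple_graph V E \<and> V = K \<union> I \<and> K \<inter> I = {}
     \<and> (\<forall>p\<in>K. \<forall>q\<in>K. p \<noteq> q \<longrightarrow> E p q) \<and> (\<forall>p\<in>I. \<forall>q\<in>I. \<not> E p q)"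

definition induced_P4 :: "('a \<Rightarrow> 'a \<Rightarrow> bool) \<Rightarrow> 'a set \<Rightarrow> bool" where
  "induced_P4 E W \<longleftrightarrow> (\<exists>f. bij_betw f {0::nat..3} W \<and>
     (\<forall>i\<in>{0..3}. \<forall>j\<in>{0..3}. E (f i) (f j) \<longleftrightarrow> (i = j + 1 \<or> j = i + 1)))"

definition two_switch :: "'a set \<Rightarrow> ('a \<Rightarrow> 'a \<Rightarrow> bool) \<Rightarrow> 'a \<Rightarrow> 'a \<Rightarrow> 'a \<Rightarrow> 'a \<Rightarrow> bool" where
  "two_switch V E a b c d \<longleftrightarrow> a \<in> V \<and> b \<in> V \<and> c \<in> V \<and> d \<in> V \<and> distinct [a, b, c, d]
     \<and> E a b \<and> E c d \<and> \<not> E a c \<and> \<not> E b d"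

definition A4_adj :: "'a set \<Rightarrow> ('a \<Rightarrow> 'a \<Rightarrow> bool) \<Rightarrow> 'a \<Rightarrow> 'a \<Rightarrow> bool" where
  "A4_adj V E p q \<longleftrightarrow> p \<noteq> q \<and> (\<exists>a b c d. two_switch V E a b c d
     \<and> p \<in> {a, b, c, d} \<and> q \<in> {a, b, c, d})"

definition is_path :: "('a \<Rightarrow> 'a \<Rightarrow> bool) \<Rightarrow> 'a list \<Rightarrow> bool" where
  "is_path R ps \<longleftrightarrow> ps \<noteq> [] \<and> distinct ps \<and> (\<forall>i. Suc i < length ps \<longrightarrow> R (ps ! i) (ps ! Suc i))"

definition sigma :: "'a set \<Rightarrow> ('a \<Rightarrow> 'a \<Rightarrow> bool) \<Rightarrow> 'a \<Rightarrow> 'a \<Rightarrow> nat" where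
  "sigma V E u v = card {W. W \<subseteq> V \<and> u \<in> W \<and> v \<in> W \<and> induced_P4 E W}"

text \<open>Underlying simple graph of the factor graph Phi(S) on I.\<close>
definition Phi_adj :: "'a set \<Rightarrow> ('a \<Rightarrow> 'a \<Rightarrow> bool) \<Rightarrow> 'a set \<Rightarrow> 'a \<Rightarrow> 'a \<Rightarrow> bool" where
  "Phi_adj V E I u v \<longleftrightarrow> u \<in> I \<and> v \<in> I \<and> u \<noteq> v \<and> sigma V E u v \<ge> 1"

definition connected_on :: "'a set \<Rightarrow> ('a \<Rightarrow> 'a \<Rightarrow> bool) \<Rightarrow> bool" where
  "connected_on X R \<longleftrightarrow> (\<forall>p\<in>X. \<forall>q\<in>X. (\<lambda>s t. s \<in> X \<and> t \<in> X \<and> R s t)\<^sup>*\<^sup>* p q)"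

end

theory Submission imports Defs begin
lemma P4_intro:
  assumes "distinct [p,s,t,q]" "\<forall>m n. E m n \<longrightarrow> E n m" "\<forall>m. \<not> E m m"
    "E p s" "E s t" "E t q" "\<not> E p t" "\<not> E q s" "\<not> E p q"
  shows "induced_P4 E {p,s,t,q}"
proof -
  define f where "f = (\<lambda>i::nat. if i=0 then p else if i=1 then s else if i=2 then t else q)"
  have v: "f 0 = p" "f 1 = s" "f 2 = t" "f 3 = q" by (simp_all add: f_def)
  have dom: "{0..3::nat} = {0,1,2,3}" by auto
  have im: "f ` {0..3} = {p,s,t,q}" unfolding dom using v by simp
  have inj: "inj_on f {0..3}"
    unfolding dom using v assms(1) by (auto simp: inj_on_def)
  have adj: "\<forall>i\<in>{0..3}. \<forall>j\<in>{0..3}. E (f i) (f j) \<longleftrightarrow> (i = j + 1 \<or> j = i + 1)"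
    unfolding dom using v assms(2-9) by auto
  show ?thesis unfolding induced_P4_def
    using inj im by (intro exI[of _ f]) (auto simp: bij_betw_def adj)
qed

lemma P4_fun:
  assumes "induced_P4 E W"
  obtains f where "W = {f 0, f 1, f 2, f 3}" "distinct [f 0, f 1, f 2, f (3::nat)]"
    "\<And>i j. i \<in> {0,1,2,3} \<Longrightarrow> j \<in> {0,1,2,3} \<Longrightarrow> E (f i) (f j) \<longleftrightarrow> (i = j + 1 \<or> j = i + 1)"
proof -
  obtain f where b: "bij_betw f {0::nat..3} W" and adj: "\<forall>i\<in>{0..3}. \<forall>j\<in>{0..3}. E (f i) (f j) \<longleftrightarrow> (i = j + 1 \<or> j = i + 1)"
    using assms unfolding induced_P4_def by blast
  have dom: "{0..3::nat} = {0,1,2,3}" by auto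
  have "W = {f 0, f 1, f 2, f 3}" using b unfolding bij_betw_def dom by auto
  moreover have "distinct [f 0, f 1, f 2, f (3::nat)]" using b unfolding bij_betw_def dom inj_on_def
    by auto
  moreover have "\<And>i j. i \<in> {0,1,2,3} \<Longrightarrow> j \<in> {0,1,2,3} \<Longrightarrow> E (f i) (f j) \<longleftrightarrow> (i = j + 1 \<or> j = i + 1)"
    using adj unfolding dom by blast
  ultimately show ?thesis using that by blast
qed

lemma P4_elim:
  assumes "induced_P4 E W" "w \<in> W"
  shows "\<exists>w'\<in>W. E w w'" "\<exists>w'\<in>W. w' \<noteq> w \<and> \<not> E w w'"
proof -
  obtain f where W: "W = {f 0, f 1, f 2, f 3}" and d: "distinct [f 0, f 1, f 2, f (3::nat)]"
    and adj: "\<And>i j. i \<in> {0,1,2,3} \<Longrightarrow> j \<in> {0,1,2,3} \<Longrightarrow> E (f i) (f j) \<longleftrightarrow> (i = j + 1 \<or> j = i + 1)"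
    using P4_fun[OF assms(1)] by metis
  have e: "E (f 0) (f 1)" "E (f 1) (f 0)" "E (f 2) (f 1)" "E (f 3) (f 2)"
    "\<not> E (f 0) (f 2)" "\<not> E (f 1) (f 3)" "\<not> E (f 2) (f 0)" "\<not> E (f 3) (f 1)"
    by (simp_all add: adj)
  show "\<exists>w'\<in>W. E w w'" using assms(2) e unfolding W by blast
  show "\<exists>w'\<in>W. w' \<noteq> w \<and> \<not> E w w'" using assms(2) e d unfolding W by auto
qed

lemma P4_A4:
  assumes "induced_P4 E W" "W \<subseteq> V" "p \<in> W" "q \<in> W" "p \<noteq> q"
  shows "A4_adj V E p q"
proof -
  obtain f where W: "W = {f 0, f 1, f 2, f 3}" and d: "distinct [f 0, f 1, f 2, f (3::nat)]"
    and adj: "\<And>i j. i \<in> {0,1,2,3} \<Longrightarrow> j \<in> {0,1,2,3} \<Longrightarrow> E (f i) (f j) \<longleftrightarrow> (i = j + 1 \<or> j = i + 1)"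
    using P4_fun[OF assms(1)] by metis
  have "two_switch V E (f 1) (f 0) (f 3) (f 2)"
    unfolding two_switch_def using assms(2) d W by (auto simp: adj)
  then show ?thesis unfolding A4_adj_def using assms(3-5) W by blast
qed


lemma PhiW:
  assumes "split_graph V E K I" "W \<subseteq> V" "induced_P4 E W" "p \<in> W" "q \<in> W" "p \<in> I" "q \<in> I" "p \<noteq> q"
  shows "Phi_adj V E I p q"
proof -
  have fin: "finite V" using assms(1) unfolding split_graph_def simple_graph_def by blast
  have "finite {W. W \<subseteq> V \<and> p \<in> W \<and> q \<in> W \<and> induced_P4 E W}"
    by (rule finite_subset[of _ "Pow V"]) (auto simp: fin)
  moreover have "W \<in> {W. W \<subseteq> V \<and> p \<in> W \<and> q \<in> W \<and> induced_P4 E W}" using assms by blast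
  ultimately have "card {W. W \<subseteq> V \<and> p \<in> W \<and> q \<in> W \<and> induced_P4 E W} \<ge> 1"
    by (metis One_nat_def Suc_leI card_gt_0_iff empty_iff)
  then show ?thesis unfolding Phi_adj_def sigma_def using assms by blast
qed

lemma PhiQ:
  assumes "split_graph V E K I" "p \<in> I" "q \<in> I" "p \<noteq> q" "s \<in> K" "t \<in> K"
    "E p s" "\<not> E p t" "E q t" "\<not> E q s"
  shows "Phi_adj V E I p q"
proof -
  have sg: "\<forall>m n. E m n \<longrightarrow> E n m" "\<forall>m. \<not> E m m" "\<forall>m n. E m n \<longrightarrow> m \<in> V \<and> n \<in> V"
    "V = K \<union> I" "K \<inter> I = {}" "\<forall>m\<in>K. \<forall>n\<in>K. m \<noteq> n \<longrightarrow> E m n" "\<forall>m\<in>I. \<forall>n\<in>I. \<not> E m n"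
    using assms(1) unfolding split_graph_def simple_graph_def by blast+
  have st: "s \<noteq> t" using assms by blast
  have d: "distinct [p,s,t,q]" using assms sg(5) st by auto
  have "induced_P4 E {p,s,t,q}"
    apply (rule P4_intro[OF d sg(1,2)])
    using assms sg st by auto
  moreover have "{p,s,t,q} \<subseteq> V" using assms sg(4) by auto
  ultimately show ?thesis using PhiW[OF assms(1), of "{p,s,t,q}" p q] assms by simp
qed

lemma Phi_A4:
  assumes "Phi_adj V E I p q"
  shows "A4_adj V E p q"
proof -
  have "card {W. W \<subseteq> V \<and> p \<in> W \<and> q \<in> W \<and> induced_P4 E W} \<ge> 1" "p \<noteq> q"
    using assms unfolding Phi_adj_def sigma_def by auto
  then obtain W where "W \<subseteq> V" "p \<in> W" "q \<in> W" "induced_P4 E W"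
    by (metis (mono_tags, lifting) Collect_empty_eq card.empty not_one_le_zero)
  then show ?thesis using P4_A4 \<open>p \<noteq> q\<close> by metis
qed

lemma Phi_sym: "Phi_adj V E I p q \<Longrightarrow> Phi_adj V E I q p"
  unfolding Phi_adj_def sigma_def by (auto simp: conj_commute conj_left_commute)

lemma conn4:
  assumes sym: "\<And>s t. R s t \<Longrightarrow> R t s" and "R a u" "R b v" "R p q" "p \<in> {a,u}" "q \<in> {b,v}"
  shows "connected_on {a,b,u,v} R"
proof -
  define R' where "R' = (\<lambda>s t. s \<in> {a,b,u,v} \<and> t \<in> {a,b,u,v} \<and> R s t)"
  have sy: "symp R'" unfolding R'_def symp_def using sym by blast
  have e: "R' a u" "R' b v" "R' p q" using assms unfolding R'_def by auto
  have s2: "R' u a" "R' v b" "R' q p" using e sy by (auto dest: sympD)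
  have r: "R'\<^sup>*\<^sup>* a w" if "w \<in> {a,b,u,v}" for w
  proof -
    have ap: "R'\<^sup>*\<^sup>* a p" using assms(5) e by auto
    then have aq: "R'\<^sup>*\<^sup>* a q" using e by (meson rtranclp.rtrancl_into_rtrancl)
    have ab: "R'\<^sup>*\<^sup>* a b" using aq assms(6) s2 by (auto intro: rtranclp.rtrancl_into_rtrancl)
    have av: "R'\<^sup>*\<^sup>* a v" using aq assms(6) e by (auto intro: rtranclp.rtrancl_into_rtrancl)
    show ?thesis using that ab av e by auto
  qed
  show ?thesis unfolding connected_on_def
  proof (intro ballI)
    fix s t assume "s \<in> {a,b,u,v}" "t \<in> {a,b,u,v}"
    then have "R'\<^sup>*\<^sup>* s a" "R'\<^sup>*\<^sup>* a t" using r sy by (auto dest: sympD[OF symp_rtranclp])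
    then show "(\<lambda>s t. s \<in> {a,b,u,v} \<and> t \<in> {a,b,u,v} \<and> R s t)\<^sup>*\<^sup>* s t"
      unfolding R'_def by (meson rtranclp_trans)
  qed
qed

lemma path3: "is_path R [p,q,r] \<longleftrightarrow> distinct [p,q,r] \<and> R p q \<and> R q r"
  unfolding is_path_def by (auto simp: less_Suc_eq)

lemma path4: "is_path R [p,q,r,w] \<longleftrightarrow> distinct [p,q,r,w] \<and> R p q \<and> R q r \<and> R r w"
  unfolding is_path_def by (auto simp: less_Suc_eq)


lemma split_facts:
  assumes "split_graph V E K I"
  shows "\<forall>m n. E m n \<longrightarrow> E n m" "\<forall>m. \<not> E m m"
    "\<forall>m\<in>K. \<forall>n\<in>K. m \<noteq> n \<longrightarrow> E m n" "\<forall>m\<in>I. \<forall>n\<in>I. \<not> E m n"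
  using assms unfolding split_graph_def simple_graph_def by blast+

lemma cross:
  fixes E :: "'v \<Rightarrow> 'v \<Rightarrow> bool"
  assumes "E p x" "\<not> E p y" "E p' y" "\<not> E p' x" "E q x" "\<not> E q z" "E q' z" "\<not> E q' x"
  shows "\<exists>p0\<in>{p,p'}. \<exists>q0\<in>{q,q'}. \<exists>s\<in>{x,y,z}. \<exists>t\<in>{x,y,z}. E p0 s \<and> \<not> E p0 t \<and> E q0 t \<and> \<not> E q0 s"
  using assms
  by (cases "E p z"; cases "E p' z"; cases "E q y"; cases "E q' y") (simp_all; blast)+

theorem lemma2p1:
  fixes V :: "'v set" and E :: "'v \<Rightarrow> 'v \<Rightarrow> bool" and a b u v x y z :: 'v
  assumes "distinct [a, b, u, v, x, y, z]"
    and "V = {a, b, u, v, x, y, z}"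
    and "split_graph V E {x, y, z} {a, b, u, v}"
    and "induced_P4 E {a, x, y, u}"
    and "induced_P4 E {b, x, z, v}"
  shows "(\<exists>ps. is_path (A4_adj V E) ps \<and> hd ps = u \<and> last ps = z
            \<and> set ps - {z} \<subseteq> {a, b, u, v})
         \<and> connected_on {a, b, u, v} (Phi_adj V E {a, b, u, v})"
proof -
  note sgr = assms(3)
  note sg = split_facts[OF assms(3)]
  have d: "a \<noteq> b" "a \<noteq> u" "a \<noteq> v" "b \<noteq> u" "b \<noteq> v" "u \<noteq> v" "x \<noteq> y" "x \<noteq> z" "y \<noteq> z"
    using assms(1) by auto
  have K: "E x y" "E x z" "E y z" using sg(3) d by simp_all
  have I: "\<not> E a u" "\<not> E u a" "\<not> E b v" "\<not> E v b" using sg(4) by simp_all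
  have sym: "\<And>m n. E m n \<longleftrightarrow> E n m" using sg(1) by blast
  have c1: "E a x \<or> E a y" using P4_elim(1)[OF assms(4), of a] sg(2) I by blast
  have c2: "E u x \<or> E u y" using P4_elim(1)[OF assms(4), of u] sg(2) I by blast
  have c3: "\<not> E a x \<or> \<not> E u x" using P4_elim(2)[OF assms(4), of x] K sg(1) by blast
  have c4: "\<not> E a y \<or> \<not> E u y" using P4_elim(2)[OF assms(4), of y] K sg(1) by blast
  have c5: "E b x \<or> E b z" using P4_elim(1)[OF assms(5), of b] sg(2) I by blast
  have c6: "E v x \<or> E v z" using P4_elim(1)[OF assms(5), of v] sg(2) I by blast
  have c7: "\<not> E b x \<or> \<not> E v x" using P4_elim(2)[OF assms(5), of x] K sg(1) by blast
  have c8: "\<not> E b z \<or> \<not> E v z" using P4_elim(2)[OF assms(5), of z] K sg(1) by blast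
  have ca: "(E a x \<and> \<not> E a y \<and> E u y \<and> \<not> E u x) \<or> (E u x \<and> \<not> E u y \<and> E a y \<and> \<not> E a x)"
    using c1 c2 c3 c4 by blast
  have cb: "(E b x \<and> \<not> E b z \<and> E v z \<and> \<not> E v x) \<or> (E v x \<and> \<not> E v z \<and> E b z \<and> \<not> E b x)"
    using c5 c6 c7 c8 by blast
  have "\<exists>p0\<in>{a,u}. \<exists>q0\<in>{b,v}. \<exists>s\<in>{x,y,z}. \<exists>t\<in>{x,y,z}. E p0 s \<and> \<not> E p0 t \<and> E q0 t \<and> \<not> E q0 s"
  proof -
    from ca show ?thesis
    proof
      assume A: "E a x \<and> \<not> E a y \<and> E u y \<and> \<not> E u x"
      from cb show ?thesis
      proof
        assume "E b x \<and> \<not> E b z \<and> E v z \<and> \<not> E v x"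
        then show ?thesis using cross[of E a x y u b z v] A by blast
      next
        assume "E v x \<and> \<not> E v z \<and> E b z \<and> \<not> E b x"
        then show ?thesis using cross[of E a x y u v z b] A by (simp only: insert_commute) blast
      qed
    next
      assume A: "E u x \<and> \<not> E u y \<and> E a y \<and> \<not> E a x"
      from cb show ?thesis
      proof
        assume "E b x \<and> \<not> E b z \<and> E v z \<and> \<not> E v x"
        then show ?thesis using cross[of E u x y a b z v] A by (simp only: insert_commute) blast
      next
        assume "E v x \<and> \<not> E v z \<and> E b z \<and> \<not> E b x"
        then show ?thesis using cross[of E u x y a v z b] A by (simp only: insert_commute) blast
      qed
    qed
  qed
  then obtain p q s t where pq: "p \<in> {a,u}" "q \<in> {b,v}" "s \<in> {x,y,z}" "t \<in> {x,y,z}"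
    "E p s" "\<not> E p t" "E q t" "\<not> E q s" by blast
  have PQ: "Phi_adj V E {a,b,u,v} p q"
    by (rule PhiQ[OF sgr _ _ _ pq(3,4,5,6,7,8)]) (use pq d in auto)
  have Pau: "Phi_adj V E {a,b,u,v} a u"
    by (rule PhiW[OF sgr _ assms(4)]) (use assms(2) d in auto)
  have Pbv: "Phi_adj V E {a,b,u,v} b v"
    by (rule PhiW[OF sgr _ assms(5)]) (use assms(2) d in auto)
  have conn: "connected_on {a, b, u, v} (Phi_adj V E {a, b, u, v})"
    by (rule conn4[OF _ Pau Pbv PQ pq(1,2)]) (rule Phi_sym)
  have Az: "A4_adj V E q z"
    using pq(2) assms(1,2) by (auto intro!: P4_A4[OF assms(5)])
  have Aua: "A4_adj V E u a"
    using assms(1,2) by (auto intro!: P4_A4[OF assms(4)])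
  have Apq: "A4_adj V E p q" using Phi_A4[OF PQ] .
  have "\<exists>ps. is_path (A4_adj V E) ps \<and> hd ps = u \<and> last ps = z
            \<and> set ps - {z} \<subseteq> {a, b, u, v}"
  proof (cases "p = u")
    case True
    then show ?thesis using Az Apq pq assms(1)
      by (intro exI[of _ "[u,q,z]"]) (auto simp: path3)
  next
    case False
    then have "p = a" using pq by auto
    then show ?thesis using Az Apq Aua pq assms(1)
      by (intro exI[of _ "[u,a,q,z]"]) (auto simp: path4)
  qed
  then show ?thesis using conn by blast
qed

end
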